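(* For $0<p<q<1$, \[ (1-q)\,d(p,q)\le d_{\mathrm{Pois}}(p,q)\le d(p,q). \]
   Context: $d(p,q)=p\log(p/q)+(1-p)\log((1-p)/(1-q))$ is the Bernoulli Kullback–Leibler divergence and $d_{\mathrm{Pois}}(p,q)=p\log(p/q)+q-p$ the Poisson Kullback–Leibler divergence. *)

theory Defs
  imports Complex_Main
begin

definition kl_bern :: "real \<Rightarrow> real \<Rightarrow> real" where
  "kl_bern p q = p * ln (p / q) + (1 - p) * ln ((1 - p) / (1 - q))"

definition kl_pois :: "real \<Rightarrow> real \<Rightarrow> real" where
  "kl_pois p q = p * ln (p / q) + q - p"

end

theory Submission
  imports Defs
begin

lemma lower_aux:
  fixes p q :: real
  assumes p: "0 < p" and pq: "p < q" and q1: "q < 1"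
  shows "q*p*(ln p - ln q) + q - p - (1-q)*(1-p)*(ln (1-p) - ln (1-q)) \<ge> 0"
proof -
  define f where "f x = q*x*(ln x - ln q) + q - x - (1-q)*(1-x)*(ln (1-x) - ln (1-q))" for x
  have key: "\<exists>y. DERIV f x :> y \<and> y \<le> 0" if x: "p \<le> x" "x \<le> q" for x
  proof -
    have x0: "0 < x" and x1: "x < 1" using x p q1 by auto
    have D: "DERIV f x :> q*(ln x - ln q) + q*x*(1/x) - 1
        - ((1-q)*(-1)*(ln (1-x) - ln (1-q)) + (1-q)*(1-x)*(-(1/(1-x))))"
      unfolding f_def using x0 x1
      by (auto intro!: derivative_eq_intros)
    have e: "q*(ln x - ln q) + q*x*(1/x) - 1
        - ((1-q)*(-1)*(ln (1-x) - ln (1-q)) + (1-q)*(1-x)*(-(1/(1-x))))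
        = q*ln (x/q) + (1-q)*ln ((1-x)/(1-q))"
      using x0 x1 p pq q1 by (simp add: ln_div field_simps)
    have l1: "ln (x/q) \<le> x/q - 1" using x0 p pq by (intro ln_le_minus_one) auto
    have l2: "ln ((1-x)/(1-q)) \<le> (1-x)/(1-q) - 1" using x1 q1 by (intro ln_le_minus_one) auto
    have "q*ln (x/q) \<le> q*(x/q - 1)" using l1 p pq by (intro mult_left_mono) auto
    moreover have "(1-q)*ln ((1-x)/(1-q)) \<le> (1-q)*((1-x)/(1-q) - 1)"
      using l2 q1 by (intro mult_left_mono) auto
    moreover have "q*(x/q - 1) + (1-q)*((1-x)/(1-q) - 1) = 0"
      using p pq q1 by (simp add: field_simps)
    ultimately have "q*ln (x/q) + (1-q)*ln ((1-x)/(1-q)) \<le> 0" by linarith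
    then show "\<exists>y. DERIV f x :> y \<and> y \<le> 0" using D e by auto
  qed
  have "f q \<le> f p"
  proof (rule DERIV_nonpos_imp_decreasing_open[of p q f])
    show "p \<le> q" using pq by simp
    show "\<And>x. p < x \<Longrightarrow> x < q \<Longrightarrow> \<exists>y. DERIV f x :> y \<and> y \<le> 0"
      using key by auto
    show "continuous_on {p..q} f"
      by (rule continuous_at_imp_continuous_on) (metis key DERIV_isCont atLeastAtMost_iff)
  qed
  moreover have "f q = 0" by (simp add: f_def)
  ultimately show ?thesis by (simp add: f_def)
qed

theorem lemma8:
  fixes p q :: real
  assumes "0 < p" and "p < q" and "q < 1"
  shows "(1 - q) * kl_bern p q \<le> kl_pois p q \<and> kl_pois p q \<le> kl_bern p q"
proof
  have a: "ln (p/q) = ln p - ln q" using assms by (simp add: ln_div)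
  have b: "ln ((1-p)/(1-q)) = ln (1-p) - ln (1-q)" using assms by (simp add: ln_div)
  show "(1 - q) * kl_bern p q \<le> kl_pois p q"
    using lower_aux[OF assms] unfolding kl_bern_def kl_pois_def a b
    by (simp add: algebra_simps)
next
  have l: "ln ((1-q)/(1-p)) \<le> (1-q)/(1-p) - 1" using assms by (intro ln_le_minus_one) auto
  have m: "ln ((1-p)/(1-q)) = - ln ((1-q)/(1-p))" using assms by (simp add: ln_div)
  have "(1-p) * ln ((1-q)/(1-p)) \<le> (1-p)*((1-q)/(1-p) - 1)"
    using l assms by (intro mult_left_mono) auto
  moreover have "(1-p)*((1-q)/(1-p) - 1) = p - q" using assms by (simp add: field_simps)
  ultimately show "kl_pois p q \<le> kl_bern p q"
    unfolding kl_bern_def kl_pois_def m by simp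
qed

end
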